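(* Let $P$ be the non-symmetric operad of sets in which $P(n)$ is the set of all $n$-tuples $(f_1,\dots,f_n)$ of order-preserving continuous maps $f_i:[0,1)\to[0,1)$ such that whenever $i<j$ and $t_i,t_j\in[0,1)$ we have $f_i(t_i)<f_j(t_j)$; the identity is $\mathrm{id}_{[0,1)}\in P(1)$, and composition is $(f_1,\dots,f_n)\circ((f_1^1,\dots,f_1^{k_1}),\dots,(f_n^1,\dots,f_n^{k_n}))=(f_1f_1^1,\dots,f_1f_1^{k_1},\dots,f_nf_n^1,\dots,f_nf_n^{k_n})$. Then $P$ is not isomorphic (as an operad) to its reverse $\overline{P}$.
   Context: For a non-symmetric operad of sets $Q$ with composition $\theta\circ(\theta_1,\dots,\theta_n)$, its reverse $\overline{Q}$ has $\overline{Q}(n)=Q(n)$, the same identity, and composition $\theta\circ_{\mathrm{rev}}(\theta_1,\dots,\theta_n)=\theta\circ(\theta_n,\dots,\theta_1)$. An isomorphism of operads is a family of bijections $Q(n)\to Q'(n)$ preserving identity and composition. *)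

theory Defs
  imports Complex_Main
begin

text \<open>Maps [0,1) -> [0,1) are represented as functions real => real that are
  normalised to 0 outside [0,1), so that equality of maps is equality of functions.\<close>

definition I01 :: "real set" where "I01 = {0..<1}"

definition OPC :: "(real \<Rightarrow> real) set" where
  "OPC = {f. continuous_on I01 f \<and> mono_on I01 f \<and> f ` I01 \<subseteq> I01
             \<and> (\<forall>t. t \<notin> I01 \<longrightarrow> f t = 0)}"

definition Pop :: "nat \<Rightarrow> (real \<Rightarrow> real) list set" where
  "Pop n = {fs. length fs = n \<and> (\<forall>i<n. fs ! i \<in> OPC) \<and>
     (\<forall>i j t s. i < j \<and> j < n \<and> t \<in> I01 \<and> s \<in> I01 \<longrightarrow> (fs ! i) t < (fs ! j) s)}"

definition idI :: "real \<Rightarrow> real" where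
  "idI = (\<lambda>t. if t \<in> I01 then t else 0)"

definition cmpI :: "(real \<Rightarrow> real) \<Rightarrow> (real \<Rightarrow> real) \<Rightarrow> real \<Rightarrow> real" where
  "cmpI f g = (\<lambda>t. if t \<in> I01 then f (g t) else 0)"

definition opcomp :: "(real \<Rightarrow> real) list \<Rightarrow> (real \<Rightarrow> real) list list \<Rightarrow> (real \<Rightarrow> real) list" where
  "opcomp th ths = concat (map2 (\<lambda>f gs. map (cmpI f) gs) th ths)"

definition iso_to_reverse :: "(nat \<Rightarrow> (real \<Rightarrow> real) list \<Rightarrow> (real \<Rightarrow> real) list) \<Rightarrow> bool" where
  "iso_to_reverse \<phi> \<longleftrightarrow>
     (\<forall>n. bij_betw (\<phi> n) (Pop n) (Pop n)) \<and>
     \<phi> 1 [idI] = [idI] \<and>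
     (\<forall>th ths. th \<in> Pop (length th) \<and> length ths = length th \<and>
        (\<forall>g \<in> set ths. g \<in> Pop (length g)) \<longrightarrow>
        \<phi> (sum_list (map length ths)) (opcomp th ths) =
        opcomp (\<phi> (length th) th) (rev (map (\<lambda>g. \<phi> (length g) g) ths)))"

end

theory Submission
  imports Defs
begin

lemma Pop0: "Pop 0 = {[]}" by (auto simp: Pop_def)

lemma Pop1: "xs \<in> Pop 1 \<longleftrightarrow> (\<exists>f. xs = [f] \<and> f \<in> OPC)"
  by (auto simp: Pop_def length_Suc_conv)

lemma Pop2: "xs \<in> Pop 2 \<Longrightarrow> \<exists>f g. xs = [f, g] \<and> f \<in> OPC \<and> g \<in> OPC \<and> f 0 < g 0"
proof -
  assume a: "xs \<in> Pop 2"
  then obtain f g where xs: "xs = [f,g]" by (auto simp: Pop_def numeral_2_eq_2 length_Suc_conv)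
  have "0 \<in> I01" by (simp add: I01_def)
  with a xs show ?thesis unfolding Pop_def
    by (metis (no_types, lifting) One_nat_def lessI mem_Collect_eq nth_Cons_0 nth_Cons_Suc
        numeral_2_eq_2 zero_less_Suc)
qed

lemma const_OPC: "c \<in> I01 \<Longrightarrow> (\<lambda>t. if t \<in> I01 then c else 0) \<in> OPC"
proof -
  assume c: "c \<in> I01"
  have "continuous_on I01 (\<lambda>t. if t \<in> I01 then c else 0)"
    by (rule continuous_on_cong[THEN iffD2, OF refl, of _ _ "\<lambda>t. c"]) auto
  moreover have "mono_on I01 (\<lambda>t. if t \<in> I01 then c else (0::real))"
    by (auto simp: mono_on_def)
  moreover have "0 \<in> I01" by (simp add: I01_def)
  ultimately show ?thesis using c unfolding OPC_def by auto
qed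

lemma z_OPC: "(\<lambda>t::real. 0::real) \<in> OPC"
proof -
  have "0 \<in> I01" by (simp add: I01_def)
  then show ?thesis unfolding OPC_def by (auto simp: mono_on_def)
qed

lemma id_OPC: "idI \<in> OPC"
proof -
  have "continuous_on I01 idI"
    by (rule continuous_on_cong[THEN iffD2, OF refl, of _ _ "\<lambda>t. t"]) (auto simp: idI_def)
  moreover have "mono_on I01 idI" by (auto simp: mono_on_def idI_def)
  moreover have "0 \<in> I01" by (simp add: I01_def)
  ultimately show ?thesis unfolding OPC_def by (auto simp: idI_def)
qed

theorem mainTheorem4:
  shows "\<not> (\<exists>\<phi>. iso_to_reverse \<phi>)"
proof
  assume "\<exists>\<phi>. iso_to_reverse \<phi>"
  then obtain \<phi> where iso: "iso_to_reverse \<phi>" by blast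
  have bij: "\<And>n. bij_betw (\<phi> n) (Pop n) (Pop n)"
    and idp: "\<phi> 1 [idI] = [idI]"
    and comp: "\<And>th ths. th \<in> Pop (length th) \<Longrightarrow> length ths = length th \<Longrightarrow>
        (\<forall>g \<in> set ths. g \<in> Pop (length g)) \<Longrightarrow>
        \<phi> (sum_list (map length ths)) (opcomp th ths) =
        opcomp (\<phi> (length th) th) (rev (map (\<lambda>g. \<phi> (length g) g) ths))"
    using iso unfolding iso_to_reverse_def by blast+
  define z where "z = (\<lambda>t::real. 0::real)"
  have zO: "z \<in> OPC" using z_OPC z_def by simp
  have "[z] \<in> Pop 1" using zO Pop1 by blast
  then obtain ys where ys: "ys \<in> Pop 1" "\<phi> 1 ys = [z]"
    using bij[of 1] unfolding bij_betw_def by (metis imageE)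
  then obtain b where b: "ys = [b]" "b \<in> OPC" using Pop1 by blast
  have "\<phi> 1 [z] \<in> Pop 1" using \<open>[z] \<in> Pop 1\<close> bij[of 1] unfolding bij_betw_def by blast
  then obtain w where w: "\<phi> 1 [z] = [w]" using Pop1 by blast
  define x where "x = cmpI b z"
  have "\<phi> (sum_list (map length [[z]])) (opcomp [b] [[z]]) =
        opcomp (\<phi> (length [b]) [b]) (rev (map (\<lambda>g. \<phi> (length g) g) [[z]]))"
    by (rule comp) (use b \<open>[z] \<in> Pop 1\<close> Pop1 in auto)
  then have "\<phi> 1 [x] = [cmpI z w]"
    using ys b w by (simp add: opcomp_def x_def)
  moreover have "cmpI z w = z" by (auto simp: cmpI_def z_def)
  ultimately have phx: "\<phi> 1 [x] = [z]" by simp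
  have z0: "(0::real) \<in> I01" by (simp add: I01_def)
  define c where "c = b 0"
  have cI: "c \<in> I01" using b(2) z0 unfolding OPC_def c_def by auto
  have xe: "x = (\<lambda>t. if t \<in> I01 then c else 0)" by (auto simp: x_def cmpI_def z_def c_def)
  define d where "d = (c + 1) / 2"
  have dI: "d \<in> I01" "c < d" using cI by (auto simp: I01_def d_def)
  define k where "k = (\<lambda>t. if t \<in> I01 then d else (0::real))"
  have th: "[x, k] \<in> Pop 2"
    unfolding Pop_def
  proof (safe)
    fix i assume "i < (2::nat)"
    then show "[x,k] ! i \<in> OPC" using const_OPC[OF cI] const_OPC[OF dI(1)] xe k_def
      by (cases i) auto
  next
    fix i j t s assume "i < j" "j < (2::nat)" "t \<in> I01" "s \<in> I01"
    then have "i = 0" "j = 1" by auto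
    then show "([x,k] ! i) t < ([x,k] ! j) s" using \<open>t \<in> I01\<close> \<open>s \<in> I01\<close> dI xe k_def by simp
  qed simp
  then have "\<phi> 2 [x,k] \<in> Pop 2" using bij[of 2] unfolding bij_betw_def by blast
  then obtain g1 g2 where g: "\<phi> 2 [x,k] = [g1,g2]" "g1 \<in> OPC" "g1 0 < g2 0"
    using Pop2 by blast
  have "\<phi> 0 [] \<in> Pop 0" using bij[of 0] Pop0 unfolding bij_betw_def by blast
  then have p0: "\<phi> 0 [] = []" using Pop0 by simp
  have "\<phi> (sum_list (map length [[idI],[]])) (opcomp [x,k] [[idI],[]]) =
        opcomp (\<phi> (length [x,k]) [x,k]) (rev (map (\<lambda>g. \<phi> (length g) g) [[idI],[]]))"
    by (rule comp) (use th id_OPC Pop1 Pop0 in \<open>auto simp: numeral_2_eq_2\<close>)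
  then have "\<phi> 1 [cmpI x idI] = [cmpI g2 idI]"
    using g p0 idp by (simp add: opcomp_def numeral_2_eq_2)
  moreover have "cmpI x idI = x" by (auto simp: cmpI_def idI_def xe)
  ultimately have "[z] = [cmpI g2 idI]" using phx by simp
  then have "z 0 = g2 0" using z0 by (simp add: cmpI_def idI_def)
  moreover have "g1 0 \<in> I01" using g(2) z0 unfolding OPC_def by auto
  then have "g1 0 \<ge> 0" by (simp add: I01_def)
  ultimately show False using g(3) z_def by simp
qed

end
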